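(* Let $B_w$ be the weighted backward shift on $\ell^1$ with weights $w_n=\sqrt{(n+1)/n}$, $n\ge1$. Then $B_w$ is hypercyclic on $\ell^1$ (in the norm topology), but $B_w$ is not $2$-frequently hypercyclic with respect to the weak topology of $\ell^1$ (and in particular not with respect to the norm topology).
   Context: For a bounded sequence $(w_n)_{n\ge1}$ of positive reals, the weighted backward shift $B_w$ on a sequence space over $\mathbb{N}$ is defined by $B_w(e_n)=w_ne_{n-1}$ for $n\ge1$, with $e_0=0$, i.e. $(B_wx)_n=w_{n+1}x_{n+1}$. An operator $T$ on a separable topological vector space $X$ is hypercyclic if some $x$ has dense orbit $\{T^nx:n\ge0\}$. For $q\in\mathbb{N}$, $T$ is $q$-frequently hypercyclic if there is $x\in X$ such that for every nonempty open $U\subset X$ the set $\{n\in\mathbb{N}:T^nx\in U\}$ has positive $q$-lower density, where $q\text{-}\underline{\mathrm{dens}}(A)=\liminf_{N\to\infty}\frac{\mathrm{card}\{n\in A:n\le N^q\}}{N}$; equivalently, for every nonempty open $U$ there are a strictly increasing sequence $(n_k)$ and $C>0$ with $T^{n_k}x\in U$ and $n_k\le Ck^q$ for all $k$. *)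

theory Defs
  imports "HOL-Analysis.Analysis"
begin

text \<open>The sequence space l^1 (complex scalars), sequences indexed from 0.
  Coordinate k corresponds to the paper's index k+1 (paper indexes from 1).\<close>

definition l1 :: "(nat \<Rightarrow> complex) set" where
  "l1 = {x. summable (\<lambda>n. norm (x n))}"

definition l1_norm :: "(nat \<Rightarrow> complex) \<Rightarrow> real" where
  "l1_norm x = (\<Sum>n. norm (x n))"

text \<open>Weighted backward shift B_w(e_n) = w_n e_(n-1) (n \<ge> 1, e_0 = 0) in paper indexing;
  with 0-based coordinates k (paper index k+1): (B_w x)_k = w_(k+2) x_(k+1).\<close>

definition wshift :: "(nat \<Rightarrow> real) \<Rightarrow> (nat \<Rightarrow> complex) \<Rightarrow> (nat \<Rightarrow> complex)" where
  "wshift w x = (\<lambda>k. complex_of_real (w (k + 2)) * x (Suc k))"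

definition l1_norm_open :: "(nat \<Rightarrow> complex) set \<Rightarrow> bool" where
  "l1_norm_open U \<longleftrightarrow> U \<subseteq> l1 \<and>
     (\<forall>x\<in>U. \<exists>\<epsilon>>0. {y \<in> l1. l1_norm (\<lambda>n. y n - x n) < \<epsilon>} \<subseteq> U)"

definition l1_functional :: "((nat \<Rightarrow> complex) \<Rightarrow> complex) \<Rightarrow> bool" where
  "l1_functional f \<longleftrightarrow>
     (\<forall>x\<in>l1. \<forall>y\<in>l1. f (\<lambda>n. x n + y n) = f x + f y) \<and>
     (\<forall>c. \<forall>x\<in>l1. f (\<lambda>n. c * x n) = c * f x) \<and>
     (\<exists>C. \<forall>x\<in>l1. norm (f x) \<le> C * l1_norm x)"

definition l1_weak_open :: "(nat \<Rightarrow> complex) set \<Rightarrow> bool" where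
  "l1_weak_open U \<longleftrightarrow> U \<subseteq> l1 \<and>
     (\<forall>x\<in>U. \<exists>F \<epsilon>. finite F \<and> (\<forall>f\<in>F. l1_functional f) \<and> \<epsilon> > 0 \<and>
        {y \<in> l1. \<forall>f\<in>F. norm (f y - f x) < \<epsilon>} \<subseteq> U)"

definition hypercyclic_l1_norm :: "((nat \<Rightarrow> complex) \<Rightarrow> (nat \<Rightarrow> complex)) \<Rightarrow> bool" where
  "hypercyclic_l1_norm T \<longleftrightarrow>
     (\<exists>x\<in>l1. \<forall>U. l1_norm_open U \<and> U \<noteq> {} \<longrightarrow> (\<exists>n. (T ^^ n) x \<in> U))"

definition q_lower_dens :: "nat \<Rightarrow> nat set \<Rightarrow> ereal" where
  "q_lower_dens q A =
     Liminf sequentially (\<lambda>N. ereal (real (card {n \<in> A. n \<le> N ^ q}) / real N))"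

definition q_freq_hypercyclic_l1_weak ::
    "nat \<Rightarrow> ((nat \<Rightarrow> complex) \<Rightarrow> (nat \<Rightarrow> complex)) \<Rightarrow> bool" where
  "q_freq_hypercyclic_l1_weak q T \<longleftrightarrow>
     (\<exists>x\<in>l1. \<forall>U. l1_weak_open U \<and> U \<noteq> {} \<longrightarrow>
        q_lower_dens q {n. (T ^^ n) x \<in> U} > 0)"

end

theory Submission
  imports Defs
begin


definition Pw :: "nat \<Rightarrow> nat \<Rightarrow> real" where
  "Pw n k = sqrt ((real k + real n + 2) / (real k + 2))"

abbreviation "W \<equiv> (\<lambda>n::nat. sqrt ((real n + 1) / real n))"

lemma Pw_pos: "Pw n k > 0" unfolding Pw_def by (auto intro!: divide_pos_pos)

lemma funpow_W: "(wshift W ^^ n) x k = complex_of_real (Pw n k) * x (k + n)"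
proof (induction n arbitrary: x k)
  case 0
  then show ?case by (simp add: Pw_def)
next
  case (Suc n)
  have "(wshift W ^^ Suc n) x k = (wshift W ^^ n) (wshift W x) k"
    by (simp only: funpow_Suc_right comp_def)
  also have "\<dots> = complex_of_real (Pw n k) * (complex_of_real (W (k+n+2)) * x (Suc (k+n)))"
    by (simp only: Suc.IH) (simp add: wshift_def algebra_simps)
  also have "Pw n k * W (k+n+2) = Pw (Suc n) k"
  proof -
    have "Pw n k * W (k+n+2) = sqrt ((real k + real n + 2) / (real k + 2) * ((real (k+n+2) + 1) / real (k+n+2)))"
      unfolding Pw_def by (simp add: real_sqrt_mult[symmetric])
    also have "(real k + real n + 2) / (real k + 2) * ((real (k+n+2) + 1) / real (k+n+2)) = (real k + real (Suc n) + 2) / (real k + 2)"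
    proof -
      have h: "real k + real n + 2 > 0" "real k + 2 > 0" by auto
      have e: "real (k+n+2) = real k + real n + 2" by simp
      have g: "\<And>a b c::real. a > 0 \<Longrightarrow> c > 0 \<Longrightarrow> a / c * (b / a) = b / c" by simp
      have "(real k + real n + 2) / (real k + 2) * ((real (k+n+2) + 1) / real (k+n+2))
          = (real (k+n+2) + 1) / (real k + 2)" unfolding e using h by (rule g)
      then show ?thesis by simp
    qed
    finally show ?thesis by (simp add: Pw_def)
  qed
  hence "complex_of_real (Pw n k) * (complex_of_real (W (k+n+2)) * x (Suc (k+n))) = complex_of_real (Pw (Suc n) k) * x (k + Suc n)"
    by (metis (no_types, lifting) add_Suc_right mult.assoc of_real_mult)
  finally show ?case .
qed

lemma l1_norm_nonneg': "x \<in> l1 \<Longrightarrow> l1_norm x \<ge> 0"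
  unfolding l1_norm_def by (rule suminf_nonneg) (auto simp: l1_def)

lemma l1_add: "x \<in> l1 \<Longrightarrow> y \<in> l1 \<Longrightarrow> (\<lambda>n. x n + y n) \<in> l1"
  unfolding l1_def
proof (clarsimp)
  assume "summable (\<lambda>n. norm (x n))" "summable (\<lambda>n. norm (y n))"
  hence "summable (\<lambda>n. norm (x n) + norm (y n))" by (rule summable_add)
  thus "summable (\<lambda>n. norm (x n + y n))"
    by (rule summable_comparison_test'[where N=0]) (simp add: norm_triangle_ineq)
qed

lemma l1_minus: "x \<in> l1 \<Longrightarrow> (\<lambda>n. - x n) \<in> l1"
  unfolding l1_def by simp

lemma l1_diff: "x \<in> l1 \<Longrightarrow> y \<in> l1 \<Longrightarrow> (\<lambda>n. x n - y n) \<in> l1"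
  using l1_add[OF _ l1_minus, of x y] by simp

lemma l1_triangle: assumes "x \<in> l1" "y \<in> l1"
  shows "l1_norm (\<lambda>n. x n + y n) \<le> l1_norm x + l1_norm y"
proof -
  have s: "summable (\<lambda>n. norm (x n))" "summable (\<lambda>n. norm (y n))" using assms by (auto simp: l1_def)
  have "l1_norm (\<lambda>n. x n + y n) \<le> (\<Sum>n. norm (x n) + norm (y n))"
    unfolding l1_norm_def
    apply (rule suminf_le)
    using l1_add[OF assms] s by (auto simp: l1_def norm_triangle_ineq intro: summable_add)
  also have "\<dots> = l1_norm x + l1_norm y" unfolding l1_norm_def using s by (simp add: suminf_add)
  finally show ?thesis .
qed

lemma l1_finite: assumes "\<And>k. k \<ge> d \<Longrightarrow> x k = 0"
  shows "x \<in> l1" "l1_norm x = (\<Sum>k<d. norm (x k))"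
proof -
  have "(\<lambda>n. norm (x n)) sums (\<Sum>k<d. norm (x k))"
    by (rule sums_finite) (use assms in auto)
  then show "x \<in> l1" "l1_norm x = (\<Sum>k<d. norm (x k))"
    unfolding l1_def l1_norm_def by (auto simp: sums_iff)
qed



lemma coord0_le: "x \<in> l1 \<Longrightarrow> norm (x 0) \<le> l1_norm x"
proof -
  assume "x \<in> l1"
  hence "sum (\<lambda>n. norm (x n)) {0} \<le> (\<Sum>n. norm (x n))"
    by (intro sum_le_suminf) (auto simp: l1_def)
  thus ?thesis by (simp add: l1_norm_def)
qed

definition U0 :: "(nat \<Rightarrow> complex) set" where "U0 = {y \<in> l1. 1 < norm (y 0)}"

lemma U0_open: "l1_weak_open U0"
  unfolding l1_weak_open_def
proof (intro conjI ballI)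
  show "U0 \<subseteq> l1" by (auto simp: U0_def)
  fix x assume x: "x \<in> U0"
  have f: "l1_functional (\<lambda>y. y 0)"
    unfolding l1_functional_def using coord0_le by (auto intro!: exI[of _ 1])
  show "\<exists>F \<epsilon>. finite F \<and> (\<forall>f\<in>F. l1_functional f) \<and> \<epsilon> > 0 \<and>
        {y \<in> l1. \<forall>f\<in>F. norm (f y - f x) < \<epsilon>} \<subseteq> U0"
  proof (intro exI conjI)
    show "finite {\<lambda>y. y 0}" by simp
    show "\<forall>f\<in>{\<lambda>y::nat\<Rightarrow>complex. y 0}. l1_functional f" using f by simp
    show "norm (x 0) - 1 > 0" using x by (simp add: U0_def)
    show "{y \<in> l1. \<forall>f\<in>{\<lambda>y. y 0}. norm (f y - f x) < norm (x 0) - 1} \<subseteq> U0"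
    proof clarsimp
      fix y assume y: "y \<in> l1" "norm (y 0 - x 0) < norm (x 0) - 1"
      have "norm (x 0) \<le> norm (y 0) + norm (y 0 - x 0)"
        by (metis norm_triangle_sub add.commute norm_minus_commute)
      thus "y \<in> U0" using y by (simp add: U0_def)
    qed
  qed
qed

lemma U0_ne: "U0 \<noteq> {}"
proof -
  have "(\<lambda>n. if n = 0 then 2 else 0) \<in> U0"
    unfolding U0_def using l1_finite(1)[of 1 "\<lambda>n. if n = 0 then 2 else 0"] by auto
  thus ?thesis by auto
qed

lemma Pw0_le: assumes "n \<le> N^2" "N \<ge> 1" shows "Pw n 0 \<le> 2 * real N"
proof -
  have "real n \<le> real N ^ 2" using assms(1) by (metis of_nat_le_iff of_nat_power)
  moreover have "1 \<le> real N" using assms(2) by simp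
  ultimately have "(real n + 2) / 2 \<le> (2 * real N)^2"
  proof -
    assume a: "real n \<le> real N ^ 2" "1 \<le> real N"
    have "1 * 1 \<le> real N * real N" using a(2) by (intro mult_mono) auto
    thus ?thesis using a(1) by (simp add: power2_eq_square)
  qed
  hence "Pw n 0 \<le> sqrt ((2 * real N)^2)" unfolding Pw_def by (simp add: add.commute)
  thus ?thesis unfolding real_sqrt_abs by simp
qed

lemma not_qfh: "\<not> q_freq_hypercyclic_l1_weak 2 (wshift W)"
proof
  assume "q_freq_hypercyclic_l1_weak 2 (wshift W)"
  then obtain x where x: "x \<in> l1" and dens: "q_lower_dens 2 {n. (wshift W ^^ n) x \<in> U0} > 0"
    unfolding q_freq_hypercyclic_l1_weak_def using U0_open U0_ne by blast
  define A where "A = {n. (wshift W ^^ n) x \<in> U0}"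
  have Ax: "n \<in> A \<Longrightarrow> 1 < Pw n 0 * norm (x n)" for n
    unfolding A_def U0_def by (simp add: funpow_W norm_mult abs_of_pos[OF Pw_pos])
  obtain c :: real where c: "0 < c" "ereal c < q_lower_dens 2 A"
    using ereal_dense2[OF dens[folded A_def]] by (auto simp: zero_ereal_def[symmetric])
  have ev1: "eventually (\<lambda>N. c < real (card {n \<in> A. n \<le> N ^ 2}) / real N) sequentially"
    using less_LiminfD[OF c(2)[unfolded q_lower_dens_def]] by simp
  have sx: "summable (\<lambda>n. norm (x n))" using x by (simp add: l1_def)
  then obtain M0 where M0: "\<And>m n. m \<ge> M0 \<Longrightarrow> norm (sum (\<lambda>n. norm (x n)) {m..<n}) < c/4"
    unfolding summable_Cauchy by (metis c(1) zero_less_divide_iff zero_less_numeral)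
  have ev2: "eventually (\<lambda>N. N \<ge> nat \<lceil>2 * (real M0 + 1) / c\<rceil> + 1) sequentially"
    by (rule eventually_ge_at_top)
  obtain N where N1: "c < real (card {n \<in> A. n \<le> N ^ 2}) / real N"
     and N2: "N \<ge> nat \<lceil>2 * (real M0 + 1) / c\<rceil> + 1"
    using eventually_conj[OF ev1 ev2] eventually_sequentially by auto
  have Npos: "N \<ge> 1" using N2 by simp
  have "real N \<ge> 2 * (real M0 + 1) / c" using N2 by linarith
  hence cN: "c * real N / 2 \<ge> real M0 + 1" using c(1) by (simp add: field_simps)
  define M where "M = nat \<lfloor>c * real N / 2\<rfloor>"
  have MM0: "M \<ge> M0" unfolding M_def using cN by linarith
  have Mle: "real M \<le> c * real N / 2" unfolding M_def using cN by linarith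
  define S where "S = {n \<in> A. M \<le> n \<and> n < N^2 + 1}"
  have sub: "{n \<in> A. n \<le> N ^ 2} \<subseteq> {..<M} \<union> S" unfolding S_def by auto
  have "card {n \<in> A. n \<le> N ^ 2} \<le> card ({..<M} \<union> S)"
    by (rule card_mono[OF _ sub]) (auto simp: S_def)
  also have "\<dots> \<le> M + card S" using card_Un_le[of "{..<M}" S] by simp
  finally have cardS: "real (card {n \<in> A. n \<le> N ^ 2}) \<le> real M + real (card S)" by linarith
  have "c * real N < real (card {n \<in> A. n \<le> N ^ 2})" using N1 Npos by (simp add: field_simps)
  hence cS: "c * real N / 2 < real (card S)" using cardS Mle by linarith
  have each: "1 / (2 * real N) < norm (x n)" if "n \<in> S" for n
  proof -
    have "n \<in> A" "n \<le> N^2" using that by (auto simp: S_def)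
    hence "1 < Pw n 0 * norm (x n)" "Pw n 0 \<le> 2 * real N" using Ax Pw0_le Npos by auto
    hence "1 < 2 * real N * norm (x n)"
      by (smt (verit) mult_right_mono norm_ge_zero)
    thus ?thesis using Npos by (simp add: field_simps)
  qed
  have "real (card S) * (1 / (2 * real N)) = (\<Sum>n\<in>S. 1 / (2 * real N))" by simp
  also have "\<dots> \<le> (\<Sum>n\<in>S. norm (x n))"
    by (rule sum_mono) (use each in force)
  also have "\<dots> \<le> sum (\<lambda>n. norm (x n)) {M..<N^2+1}"
    by (rule sum_mono2) (auto simp: S_def)
  also have "\<dots> < c / 4" using M0[OF MM0, of "N^2+1"] by simp
  finally have "real (card S) * (1 / (2 * real N)) < c / 4" .
  moreover have "c / 4 < real (card S) * (1 / (2 * real N))"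
    using cS Npos by (simp add: field_simps)
  ultimately show False by simp
qed



lemma coord_le: "x \<in> l1 \<Longrightarrow> norm (x m) \<le> l1_norm x"
proof -
  assume "x \<in> l1"
  hence "sum (\<lambda>n. norm (x n)) {m} \<le> (\<Sum>n. norm (x n))"
    by (intro sum_le_suminf) (auto simp: l1_def)
  thus ?thesis by (simp add: l1_norm_def)
qed

lemma partial_le: "x \<in> l1 \<Longrightarrow> (\<Sum>m<M. norm (x m)) \<le> l1_norm x"
  unfolding l1_norm_def by (intro sum_le_suminf) (auto simp: l1_def)

lemma l1_series:
  fixes f :: "nat \<Rightarrow> nat \<Rightarrow> complex"
  assumes f: "\<And>j. f j \<in> l1" and s: "summable (\<lambda>j. l1_norm (f j))"
  shows "summable (\<lambda>j. f j m)" "(\<lambda>m. \<Sum>j. f j m) \<in> l1"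
        "l1_norm (\<lambda>m. \<Sum>j. f j m) \<le> (\<Sum>j. l1_norm (f j))"
proof -
  have sn: "summable (\<lambda>j. norm (f j m))" for m
    by (rule summable_comparison_test'[OF s, where N=0]) (use coord_le[OF f] in simp)
  thus "summable (\<lambda>j. f j m)" by (rule summable_norm_cancel)
  have bound: "(\<Sum>m<M. norm (\<Sum>j. f j m)) \<le> (\<Sum>j. l1_norm (f j))" for M
  proof -
    have "(\<Sum>m<M. norm (\<Sum>j. f j m)) \<le> (\<Sum>m<M. \<Sum>j. norm (f j m))"
      by (rule sum_mono) (rule summable_norm[OF sn])
    also have "\<dots> = (\<Sum>j. \<Sum>m<M. norm (f j m))"
      by (rule suminf_sum[symmetric]) (rule sn)
    also have "\<dots> \<le> (\<Sum>j. l1_norm (f j))"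
      by (rule suminf_le) (auto intro: partial_le[OF f] summable_sum sn s)
    finally show ?thesis .
  qed
  have sum1: "summable (\<lambda>m. norm (\<Sum>j. f j m))"
    by (rule summableI_nonneg_bounded[OF _ bound]) simp
  thus "(\<lambda>m. \<Sum>j. f j m) \<in> l1" by (simp add: l1_def)
  show "l1_norm (\<lambda>m. \<Sum>j. f j m) \<le> (\<Sum>j. l1_norm (f j))"
    by (simp only: l1_norm_def[of "\<lambda>m. \<Sum>j. f j m"]) (rule suminf_le_const[OF sum1 bound])
qed

definition sv :: "nat \<Rightarrow> (nat \<Rightarrow> complex) \<Rightarrow> nat \<Rightarrow> complex" where
  "sv N y m = (if N \<le> m then complex_of_real (sqrt ((real (m - N) + 2) / (real m + 2))) * y (m - N) else 0)"

lemma Bsv: assumes "n \<le> N"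
  shows "(wshift W ^^ n) (sv N y) k = (if N - n \<le> k then
     complex_of_real (sqrt ((real (k - (N - n)) + 2) / (real k + 2))) * y (k - (N - n)) else 0)"
proof (cases "N - n \<le> k")
  case True
  hence e1: "N \<le> k + n" "k + n - N = k - (N - n)" using assms by auto
  have "Pw n k * sqrt ((real (k + n - N) + 2) / (real (k + n) + 2))
      = sqrt ((real k + real n + 2) / (real k + 2) * ((real (k + n - N) + 2) / (real k + real n + 2)))"
    unfolding Pw_def by (simp add: real_sqrt_mult[symmetric])
  also have "(real k + real n + 2) / (real k + 2) * ((real (k + n - N) + 2) / (real k + real n + 2))
     = (real (k + n - N) + 2) / (real k + 2)"
  proof -
    have g: "\<And>a b c::real. a > 0 \<Longrightarrow> a / c * (b / a) = b / c" by simp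
    show ?thesis by (rule g) simp
  qed
  finally have "Pw n k * sqrt ((real (k + n - N) + 2) / (real (k + n) + 2)) = sqrt ((real (k + n - N) + 2) / (real k + 2))" .
  hence eq: "complex_of_real (Pw n k) * complex_of_real (sqrt ((real (k + n - N) + 2) / (real (k + n) + 2)))
     = complex_of_real (sqrt ((real (k + n - N) + 2) / (real k + 2)))"
    by (metis of_real_mult)
  have "(wshift W ^^ n) (sv N y) k = complex_of_real (Pw n k) * sv N y (k + n)"
    by (rule funpow_W)
  also have "sv N y (k + n) = complex_of_real (sqrt ((real (k + n - N) + 2) / (real (k + n) + 2))) * y (k + n - N)"
    using e1(1) unfolding sv_def by simp
  also have "complex_of_real (Pw n k) * (complex_of_real (sqrt ((real (k + n - N) + 2) / (real (k + n) + 2))) * y (k + n - N))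
     = complex_of_real (sqrt ((real (k + n - N) + 2) / (real k + 2))) * y (k + n - N)"
    by (simp only: mult.assoc[symmetric] eq)
  finally show ?thesis using True unfolding e1(2) by simp
next
  case False
  hence "\<not> N \<le> k + n" by simp
  then show ?thesis using False unfolding funpow_W sv_def by simp
qed

lemma Bsv_eq: "(wshift W ^^ N) (sv N y) = y"
  by (rule ext) (simp add: Bsv)

lemma Bsv_zero: assumes "N + d \<le> n" "\<And>k. k \<ge> d \<Longrightarrow> y k = 0"
  shows "(wshift W ^^ n) (sv N y) k = 0"
  using assms by (simp add: funpow_W sv_def)

lemma Bsv_norm: assumes "n \<le> N" and y0: "\<And>k. k \<ge> d \<Longrightarrow> y k = 0"
  shows "(wshift W ^^ n) (sv N y) \<in> l1"
    "l1_norm ((wshift W ^^ n) (sv N y)) \<le> sqrt ((real d + 2) / (real (N - n) + 2)) * (\<Sum>k<d. norm (y k))"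
proof -
  define G where "G = N - n"
  define v where "v = (wshift W ^^ n) (sv N y)"
  have vG: "v (i + G) = complex_of_real (sqrt ((real i + 2) / (real (i + G) + 2))) * y i" for i
    unfolding v_def G_def using assms(1) by (simp add: Bsv)
  have v0: "v k = 0" if "k < G" for k
    unfolding v_def using assms(1) that by (simp add: Bsv G_def)
  have "(\<lambda>i. norm (v (i + G))) sums (\<Sum>i<d. norm (v (i + G)))"
    by (rule sums_finite) (auto simp: vG y0)
  hence "(\<lambda>k. norm (v k)) sums (\<Sum>i<d. norm (v (i + G)))"
    using sums_iff_shift[of "\<lambda>k. norm (v k)" G] v0 by simp
  hence vl: "v \<in> l1" "l1_norm v = (\<Sum>i<d. norm (v (i + G)))"
    unfolding l1_def l1_norm_def by (auto simp: sums_iff)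
  thus "(wshift W ^^ n) (sv N y) \<in> l1" by (simp add: v_def)
  have "(\<Sum>i<d. norm (v (i + G))) \<le> (\<Sum>i<d. sqrt ((real d + 2) / (real G + 2)) * norm (y i))"
  proof (rule sum_mono)
    fix i assume "i \<in> {..<d}"
    hence i: "i < d" by simp
    have "(real i + 2) / (real (i + G) + 2) \<le> (real d + 2) / (real G + 2)"
    proof -
      have "(real i + 2) * (real G + 2) \<le> (real d + 2) * (real (i + G) + 2)"
      proof -
        have h1: "real i * real G \<le> real d * real G" by (intro mult_right_mono) (use i in auto)
        have h2: "0 \<le> real d * real i" by simp
        have e1: "(real i + 2) * (real G + 2) = real i * real G + 2*real i + 2*real G + 4" by (simp add: algebra_simps)
        have e2: "(real d + 2) * (real (i+G) + 2) = real d * real G + real d * real i + 2*real d + 2*real i + 2*real G + 4" by (simp add: algebra_simps)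
        show ?thesis unfolding e1 e2 using h1 h2 i by linarith
      qed
      thus ?thesis by (simp add: divide_simps)
    qed
    hence "sqrt ((real i + 2) / (real (i + G) + 2)) \<le> sqrt ((real d + 2) / (real G + 2))"
      by (rule real_sqrt_le_mono)
    thus "norm (v (i + G)) \<le> sqrt ((real d + 2) / (real G + 2)) * norm (y i)"
      by (simp add: vG norm_mult mult_right_mono)
  qed
  also have "\<dots> = sqrt ((real d + 2) / (real G + 2)) * (\<Sum>i<d. norm (y i))"
    by (simp add: sum_distrib_left)
  finally show "l1_norm ((wshift W ^^ n) (sv N y)) \<le> sqrt ((real d + 2) / (real (N - n) + 2)) * (\<Sum>k<d. norm (y k))"
    using vl by (simp add: v_def G_def)
qed



definition gq :: "(rat \<times> rat) list \<Rightarrow> nat \<Rightarrow> complex" where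
  "gq l k = (if k < length l then Complex (of_rat (fst (l!k))) (of_rat (snd (l!k))) else 0)"

lemma gq_fin: "k \<ge> length l \<Longrightarrow> gq l k = 0" by (simp add: gq_def)

lemma rat_approx: fixes a d :: real assumes "d > 0" shows "\<exists>r::rat. \<bar>of_rat r - a\<bar> < d"
proof -
  obtain q where q: "q \<in> \<rat>" "a - d < q" "q < a + d" using Rats_dense_in_real[of "a - d" "a + d"] assms by auto
  then obtain r where "q = of_rat r" by (auto elim: Rats_cases)
  thus ?thesis using q by (intro exI[of _ r]) auto
qed

lemma dense_gq: assumes u: "u \<in> l1" and e: "e > 0"
  shows "\<exists>l. (\<lambda>k. gq l k - u k) \<in> l1 \<and> l1_norm (\<lambda>k. gq l k - u k) < e"
proof -
  have su: "summable (\<lambda>k. norm (u k))" using u by (simp add: l1_def)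
  then obtain K where K: "\<And>m n. m \<ge> K \<Longrightarrow> norm (sum (\<lambda>k. norm (u k)) {m..<n}) < e/2"
    unfolding summable_Cauchy by (metis e half_gt_zero)
  define \<delta> where "\<delta> = e / (8 * (real K + 1))"
  have dpos: "\<delta> > 0" using e by (simp add: \<delta>_def)
  obtain qr where qr: "\<And>k. \<bar>of_rat (qr k) - Re (u k)\<bar> < \<delta>"
  proof -
    have "\<forall>k. \<exists>r::rat. \<bar>of_rat r - Re (u k)\<bar> < \<delta>" using rat_approx[OF dpos] by blast
    then obtain f where "\<forall>k. \<bar>of_rat (f k) - Re (u k)\<bar> < \<delta>" by (metis choice)
    thus ?thesis using that by blast
  qed
  obtain qi where qi: "\<And>k. \<bar>of_rat (qi k) - Im (u k)\<bar> < \<delta>"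
  proof -
    have "\<forall>k. \<exists>r::rat. \<bar>of_rat r - Im (u k)\<bar> < \<delta>" using rat_approx[OF dpos] by blast
    then obtain f where "\<forall>k. \<bar>of_rat (f k) - Im (u k)\<bar> < \<delta>" by (metis choice)
    thus ?thesis using that by blast
  qed
  define l where "l = map (\<lambda>k. (qr k, qi k)) [0..<K]"
  define h where "h k = norm (gq l k - u k)" for k
  have h1: "h k \<le> 2 * \<delta>" if "k < K" for k
  proof -
    have "gq l k = Complex (of_rat (qr k)) (of_rat (qi k))" using that by (simp add: gq_def l_def)
    hence "h k \<le> \<bar>of_rat (qr k) - Re (u k)\<bar> + \<bar>of_rat (qi k) - Im (u k)\<bar>"
      unfolding h_def using cmod_le[of "gq l k - u k"] by simp
    thus ?thesis using qr[of k] qi[of k] by linarith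
  qed
  have h2: "h k = norm (u k)" if "k \<ge> K" for k
    using that by (simp add: h_def gq_fin l_def)
  have bnd: "(\<Sum>k<M. h k) \<le> 3 * e / 4" for M
  proof -
    define P where "P = max M K"
    have "(\<Sum>k<M. h k) \<le> (\<Sum>k<P. h k)"
      by (rule sum_mono2) (auto simp: P_def h_def)
    also have "\<dots> = (\<Sum>k\<in>{0..<K}. h k) + (\<Sum>k\<in>{K..<P}. h k)"
      unfolding lessThan_atLeast0 by (rule sum.atLeastLessThan_concat[symmetric]) (auto simp: P_def)
    also have "(\<Sum>k\<in>{0..<K}. h k) \<le> (\<Sum>k\<in>{0..<K}. 2 * \<delta>)"
      by (rule sum_mono) (use h1 in auto)
    also have "\<dots> = real K * (2 * \<delta>)" by simp
    also have "\<dots> \<le> e / 4"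
    proof -
      have "real K * (2 * \<delta>) = e / 4 * (real K / (real K + 1))" by (simp add: \<delta>_def field_simps)
      also have "\<dots> \<le> e / 4 * 1" using e by (intro mult_left_mono) auto
      finally show ?thesis by simp
    qed
    also have "(\<Sum>k\<in>{K..<P}. h k) = (\<Sum>k\<in>{K..<P}. norm (u k))" by (rule sum.cong) (auto simp: h2)
    also have "\<dots> \<le> e / 2" using K[of K P] by simp
    finally show ?thesis by simp
  qed
  have sh: "summable h" by (rule summableI_nonneg_bounded[OF _ bnd]) (simp add: h_def)
  have "l1_norm (\<lambda>k. gq l k - u k) \<le> 3 * e / 4"
    unfolding l1_norm_def using suminf_le_const[OF sh bnd] by (simp add: h_def)
  moreover have "(\<lambda>k. gq l k - u k) \<in> l1"
    using sh unfolding l1_def h_def[abs_def] by simp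
  ultimately show ?thesis using e by (intro exI[of _ l]) auto
qed

definition Yq :: "nat \<Rightarrow> nat \<Rightarrow> complex" where
  "Yq i = gq (from_nat (fst (prod_decode i)))"

definition dq :: "nat \<Rightarrow> nat" where
  "dq i = length (from_nat (fst (prod_decode i)) :: (rat \<times> rat) list)"

lemma Yq_fin: "k \<ge> dq i \<Longrightarrow> Yq i k = 0" by (simp add: Yq_def dq_def gq_fin)

lemma Yq_enum: "\<exists>i\<ge>t. Yq i = gq l"
  by (intro exI[of _ "prod_encode (to_nat l, t)"]) (simp add: Yq_def le_prod_encode_2)



definition Yn :: "nat \<Rightarrow> real" where "Yn j = (\<Sum>k<dq j. norm (Yq j k))"
definition Gq :: "nat \<Rightarrow> nat" where
  "Gq j = nat \<lceil>real (dq j + 2) * (Yn j + 1)^2 * 16^j\<rceil>"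

fun ns :: "nat \<Rightarrow> nat" where
  "ns 0 = Gq 0"
| "ns (Suc j) = ns j + dq j + Gq (Suc j)"

definition zq :: "nat \<Rightarrow> nat \<Rightarrow> complex" where "zq j = sv (ns j) (Yq j)"
definition xh :: "nat \<Rightarrow> complex" where "xh = (\<lambda>m. \<Sum>j. zq j m)"

lemma ns_ge: "Gq j \<le> ns j" by (cases j) auto

lemma ns_gap: "i < j \<Longrightarrow> ns i + dq i + Gq j \<le> ns j"
proof (induction j)
  case 0 then show ?case by simp
next
  case (Suc j)
  show ?case
  proof (cases "i = j")
    case True then show ?thesis by simp
  next
    case False
    hence "ns i + dq i + Gq j \<le> ns j" using Suc by simp
    then show ?thesis by simp
  qed
qed

lemma Yn_nonneg: "Yn j \<ge> 0" unfolding Yn_def by (simp add: sum_nonneg)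

lemma small: assumes "n \<le> ns j" "Gq j \<le> ns j - n"
  shows "(wshift W ^^ n) (zq j) \<in> l1" "l1_norm ((wshift W ^^ n) (zq j)) \<le> (1/4)^j"
proof -
  show "(wshift W ^^ n) (zq j) \<in> l1" unfolding zq_def by (rule Bsv_norm(1)[OF assms(1) Yq_fin])
  define D where "D = ns j - n"
  define Y where "Y = Yn j"
  define d where "d = dq j"
  have Y0: "Y \<ge> 0" using Yn_nonneg by (simp add: Y_def)
  define b where "b = (Y + 1) * 4^j"
  have bpos: "b > 0" using Y0 by (simp add: b_def)
  have p4: "((4::real)^j)^2 = 16^j" by (induction j) (simp_all add: power2_eq_square algebra_simps)
  have b2: "b^2 = (Y+1)^2 * 16^j" by (simp only: b_def power_mult_distrib p4)
  have "real (Gq j) \<ge> real (d + 2) * (Y + 1)^2 * 16^j" unfolding Gq_def Y_def d_def by linarith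
  hence g1: "real (Gq j) \<ge> (real d + 2) * b^2" unfolding b2 by (simp add: mult.assoc add.commute)
  have "real (Gq j) \<le> real D" using assms(2) unfolding D_def by linarith
  hence DG: "real D + 2 \<ge> (real d + 2) * b^2" using g1 by linarith
  have a: "(real d + 2) / (real D + 2) \<le> 1 / b^2"
  proof -
    have "(real d + 2) * b^2 > 0" using bpos by simp
    hence "(real d + 2) / (real D + 2) \<le> (real d + 2) / ((real d + 2) * b^2)"
      using DG by (intro divide_left_mono) auto
    thus ?thesis by simp
  qed
  have "sqrt ((real d + 2) / (real D + 2)) \<le> sqrt (1 / b^2)" using a by (rule real_sqrt_le_mono)
  also have "sqrt (1 / b^2) = 1 / b" using bpos by (simp add: real_sqrt_divide)
  finally have s: "sqrt ((real d + 2) / (real D + 2)) \<le> 1 / b" .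
  have "l1_norm ((wshift W ^^ n) (zq j)) \<le> sqrt ((real d + 2) / (real D + 2)) * Y"
    unfolding zq_def D_def d_def Y_def Yn_def by (rule Bsv_norm(2)[OF assms(1) Yq_fin])
  also have "\<dots> \<le> 1 / b * Y" using s Y0 by (rule mult_right_mono)
  also have "\<dots> \<le> 1 / b * (Y + 1)" using bpos by (intro mult_left_mono) auto
  also have "\<dots> = (1/4)^j" using Y0 by (simp add: b_def power_one_over)
  finally show "l1_norm ((wshift W ^^ n) (zq j)) \<le> (1/4)^j" .
qed

lemma zq_l1: "zq j \<in> l1" "l1_norm (zq j) \<le> (1/4)^j"
  using small[of 0 j] ns_ge[of j] by auto

lemma zq_summable: "summable (\<lambda>j. l1_norm (zq j))"
  by (rule summable_comparison_test'[where N=0, OF summable_geometric[of "1/4::real"]])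
     (use zq_l1 l1_norm_nonneg' in auto)

lemma xh_l1: "xh \<in> l1"
  unfolding xh_def by (rule l1_series(2)[OF zq_l1(1) zq_summable])

lemma B_xh: "(wshift W ^^ n) xh k = (\<Sum>j. (wshift W ^^ n) (zq j) k)"
proof -
  have "(wshift W ^^ n) xh k = complex_of_real (Pw n k) * (\<Sum>j. zq j (k + n))"
    by (simp add: funpow_W xh_def)
  also have "\<dots> = (\<Sum>j. complex_of_real (Pw n k) * zq j (k + n))"
    by (rule suminf_mult[symmetric]) (rule l1_series(1)[OF zq_l1(1) zq_summable])
  also have "\<dots> = (\<Sum>j. (wshift W ^^ n) (zq j) k)" by (simp add: funpow_W)
  finally show ?thesis .
qed

lemma zero_l1: "(\<lambda>_. 0) \<in> l1" "l1_norm (\<lambda>_. 0) = 0"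
  using l1_finite[of 0 "\<lambda>_. 0"] by auto

lemma approx: "(\<lambda>k. (wshift W ^^ ns i) xh k - Yq i k) \<in> l1 \<and>
   l1_norm (\<lambda>k. (wshift W ^^ ns i) xh k - Yq i k) \<le> 2 * (1/2)^i"
proof -
  define g where "g j = (if i < j then (wshift W ^^ ns i) (zq j) else (\<lambda>_. 0))" for j
  have gl: "g j \<in> l1 \<and> l1_norm (g j) \<le> (1/2)^i * (1/2)^j" for j
  proof (cases "i < j")
    case True
    have gap: "ns i + dq i + Gq j \<le> ns j" using ns_gap[OF True] .
    hence h: "ns i \<le> ns j" "Gq j \<le> ns j - ns i" by auto
    have "(1/4::real)^j = (1/2)^j * (1/2)^j" by (simp add: power_mult_distrib[symmetric])
    also have "\<dots> \<le> (1/2)^i * (1/2)^j"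
      using True by (intro mult_right_mono power_decreasing) auto
    finally show ?thesis using small[OF h] True by (simp add: g_def)
  next
    case False then show ?thesis using zero_l1 by (simp add: g_def)
  qed
  have sg: "summable (\<lambda>j. l1_norm (g j))"
    by (rule summable_comparison_test'[where N=0, OF summable_mult[OF summable_geometric[of "1/2::real"]]])
       (use gl l1_norm_nonneg' in auto)
  have pt: "(wshift W ^^ ns i) (zq j) k = g j k + (if j = i then Yq i k else 0)" for j k
  proof -
    consider "j < i" | "j = i" | "i < j" by linarith
    then show ?thesis
    proof cases
      case 1
      have "ns j + dq j \<le> ns i" using ns_gap[OF 1] by simp
      then show ?thesis using 1 unfolding zq_def g_def by (simp add: Bsv_zero[OF _ Yq_fin])
    next
      case 2 then show ?thesis unfolding zq_def g_def by (simp add: Bsv_eq)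
    next
      case 3 then show ?thesis by (simp add: g_def)
    qed
  qed
  have gl1: "\<And>j. g j \<in> l1" using gl by blast
  have eq: "(wshift W ^^ ns i) xh k - Yq i k = (\<Sum>j. g j k)" for k
  proof -
    have "(wshift W ^^ ns i) xh k = (\<Sum>j. g j k + (if j = i then Yq i k else 0))"
      by (simp add: B_xh pt)
    also have "\<dots> = (\<Sum>j. g j k) + (\<Sum>j. (if j = i then Yq i k else 0))"
      by (rule suminf_add[symmetric]) (auto intro: l1_series(1)[OF gl1 sg])
    also have "(\<Sum>j. (if j = i then Yq i k else 0)) = Yq i k"
      using sums_single[of i "\<lambda>_. Yq i k"] by (simp add: sums_iff)
    finally show ?thesis by simp
  qed
  have "(\<lambda>k. \<Sum>j. g j k) \<in> l1" by (rule l1_series(2)[OF gl1 sg])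
  moreover have "l1_norm (\<lambda>k. \<Sum>j. g j k) \<le> (\<Sum>j. l1_norm (g j))" by (rule l1_series(3)[OF gl1 sg])
  moreover have "(\<Sum>j. l1_norm (g j)) \<le> (\<Sum>j. (1/2)^i * (1/2::real)^j)"
    by (rule suminf_le) (use gl sg in \<open>auto intro: summable_mult summable_geometric\<close>)
  moreover have "(\<Sum>j. (1/2)^i * (1/2::real)^j) = 2 * (1/2)^i"
    by (subst suminf_mult) (auto simp: suminf_geometric)
  ultimately show ?thesis unfolding eq by simp
qed

lemma hyper: "hypercyclic_l1_norm (wshift W)"
  unfolding hypercyclic_l1_norm_def
proof (intro bexI[OF _ xh_l1] allI impI)
  fix U assume "l1_norm_open U \<and> U \<noteq> {}"
  then obtain u \<epsilon> where uU: "u \<in> U" and Ul: "U \<subseteq> l1" and ep: "\<epsilon> > 0"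
    and ball: "{y \<in> l1. l1_norm (\<lambda>n. y n - u n) < \<epsilon>} \<subseteq> U"
    unfolding l1_norm_open_def by blast
  have u: "u \<in> l1" using uU Ul by auto
  obtain l where l: "(\<lambda>k. gq l k - u k) \<in> l1" "l1_norm (\<lambda>k. gq l k - u k) < \<epsilon>/2"
    using dense_gq[OF u, of "\<epsilon>/2"] ep by auto
  obtain t where t: "(1/2::real)^t < \<epsilon>/4" using real_arch_pow_inv[of "\<epsilon>/4" "1/2"] ep by auto
  obtain i where i: "i \<ge> t" "Yq i = gq l" using Yq_enum by blast
  define v where "v = (wshift W ^^ ns i) xh"
  define a where "a = (\<lambda>k. v k - Yq i k)"
  have a: "a \<in> l1" "l1_norm a \<le> 2 * (1/2)^i" using approx[of i] by (auto simp: a_def v_def)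
  have "(1/2::real)^i \<le> (1/2)^t" using i by (intro power_decreasing) auto
  hence a2: "l1_norm a < \<epsilon>/2" using a t by linarith
  have Yl: "Yq i \<in> l1" using l1_finite(1)[of "dq i" "Yq i"] Yq_fin by blast
  have "v = (\<lambda>n. a n + Yq i n)" by (simp add: a_def)
  hence vl: "v \<in> l1" using l1_add[OF a(1) Yl] by simp
  have b: "(\<lambda>k. Yq i k - u k) \<in> l1" "l1_norm (\<lambda>k. Yq i k - u k) < \<epsilon>/2" using l i by auto
  have "(\<lambda>n. v n - u n) = (\<lambda>n. a n + (Yq i n - u n))" by (simp add: a_def)
  hence "l1_norm (\<lambda>n. v n - u n) \<le> l1_norm a + l1_norm (\<lambda>k. Yq i k - u k)"
    using l1_triangle[OF a(1) b(1)] by simp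
  hence "l1_norm (\<lambda>n. v n - u n) < \<epsilon>" using a2 b by linarith
  hence "v \<in> U" using ball vl by blast
  thus "\<exists>n. (wshift W ^^ n) xh \<in> U" unfolding v_def by blast
qed


theorem mainTheorem2:
  defines "w \<equiv> (\<lambda>n::nat. sqrt ((real n + 1) / real n))"
  shows "hypercyclic_l1_norm (wshift w) \<and> \<not> q_freq_hypercyclic_l1_weak 2 (wshift w)"
  unfolding w_def using hyper not_qfh by simp

end
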